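(* Let $b>1$ and suppose $P$ satisfies $(1/2,b)$-multiplicative-expansion on $\mathcal{X}$. Suppose moreover that the following implication (constant-expansion guarantee) holds for classifiers $G$: whenever $P$ satisfies $(c,\rho)$-constant-expansion for some $c$, $\mathcal{R}_{\mathcal{A}}(G)<\rho$, and $\min_i P(\{x: G(x)=i\})>2\max\{c,\mathcal{R}_{\mathcal{A}}(G)\}$, there is a permutation $\pi:[K]\to[K]$ with $P(\{x:\pi(G(x))\neq G^*(x)\})\le \max\{c,\mathcal{R}_{\mathcal{A}}(G)\}+\mathcal{R}_{\mathcal{A}}(G)$. If a classifier $G:\mathcal{X}\to[K]$ satisfies $$\min_{i\in[K]}\mathbb{E}_P[\mathbf{1}(G(x)=i)]>\max\left\{\tfrac{2}{b-1},2\right\}\mathcal{R}_{\mathcal{A}}(G),$$ then $\mathrm{Err}_{\mathrm{unsup}}(G)\le\max\left\{\tfrac{b}{b-1},2\right\}\mathcal{R}_{\mathcal{A}}(G)$.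
   Context: $P$ is a distribution on $\mathcal{X}$ with ground-truth labelling $G^*:\mathcal{X}\to[K]$, $\mathcal{Q}_i:=\{x:G^*(x)=i\}$, $P_i(S)=P(S\cap\mathcal{Q}_i)/P(\mathcal{Q}_i)$. With augmentation maps $\mathcal{T}_{wa}$ and radius $r$: $\mathcal{A}(x):=\{x':\exists T\in\mathcal{T}_{wa},\ \|x'-T(x)\|\le r\}$, $\mathcal{N}(x):=\{x':\mathcal{A}(x)\cap\mathcal{A}(x')\neq\emptyset\}$, $\mathcal{N}(S):=\bigcup_{x\in S}\mathcal{N}(x)$, $\mathcal{N}^*(S):=\bigcup_{i}(\mathcal{N}(S\cap\mathcal{Q}_i)\cap\mathcal{Q}_i)$. $(a,b)$-multiplicative-expansion: for every $i$ and $S\subseteq\mathcal{Q}_i$ with $P_i(S)\le a$, $P_i(\mathcal{N}(S))\ge\min\{bP_i(S),1\}$. $(c,\rho)$-constant-expansion: for every $S$ with $P(S)\ge c$ and $P(S\cap\mathcal{Q}_i)\le P(\mathcal{Q}_i)/2$ for all $i$, $P(\mathcal{N}^*(S)\setminus S)\ge\min\{\rho,P(S)\}$. Consistency regularization loss: $\mathcal{R}_{\mathcal{A}}(G):=\mathbb{E}_{x\sim P}[\mathbf{1}(\exists x'\in\mathcal{A}(x)\text{ with }G(x')\neq G(x))]$. Unsupervised error: $\mathrm{Err}_{\mathrm{unsup}}(G):=\min_{\pi}P(\{x:\pi(G(x))\neq G^*(x)\})$, minimum over permutations $\pi$ of $[K]$. *)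

theory Defs
  imports "HOL-Probability.Probability" "HOL-Combinatorics.Permutations"
begin

text \<open>Outer probability of an arbitrary subset of the sample space (the sets
  N(S), N*(S) and the consistency-violation set need not be measurable).\<close>
definition outP :: "'a measure \<Rightarrow> 'a set \<Rightarrow> real" where
  "outP P S = Inf {measure P T | T. T \<in> sets P \<and> S \<subseteq> T}"

definition augset :: "'a measure \<Rightarrow> ('a \<Rightarrow> 'a::real_normed_vector) set \<Rightarrow> real \<Rightarrow> 'a \<Rightarrow> 'a set" where
  "augset P Twa r x = {x' \<in> space P. \<exists>T\<in>Twa. norm (x' - T x) \<le> r}"

definition nbhd :: "'a measure \<Rightarrow> ('a \<Rightarrow> 'a::real_normed_vector) set \<Rightarrow> real \<Rightarrow> 'a \<Rightarrow> 'a set" where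
  "nbhd P Twa r x = {x' \<in> space P. augset P Twa r x \<inter> augset P Twa r x' \<noteq> {}}"

definition nbhd_set :: "'a measure \<Rightarrow> ('a \<Rightarrow> 'a::real_normed_vector) set \<Rightarrow> real \<Rightarrow> 'a set \<Rightarrow> 'a set" where
  "nbhd_set P Twa r S = (\<Union>x\<in>S. nbhd P Twa r x)"

definition cls :: "'a measure \<Rightarrow> ('a \<Rightarrow> nat) \<Rightarrow> nat \<Rightarrow> 'a set" where
  "cls P Gs i = {x \<in> space P. Gs x = i}"

definition nbhd_star :: "'a measure \<Rightarrow> ('a \<Rightarrow> 'a::real_normed_vector) set \<Rightarrow> real \<Rightarrow> ('a \<Rightarrow> nat) \<Rightarrow> nat \<Rightarrow> 'a set \<Rightarrow> 'a set" where
  "nbhd_star P Twa r Gs K S = (\<Union>i\<in>{1..K}. nbhd_set P Twa r (S \<inter> cls P Gs i) \<inter> cls P Gs i)"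

definition mult_expansion :: "'a measure \<Rightarrow> ('a \<Rightarrow> 'a::real_normed_vector) set \<Rightarrow> real \<Rightarrow> ('a \<Rightarrow> nat) \<Rightarrow> nat \<Rightarrow> real \<Rightarrow> real \<Rightarrow> bool" where
  "mult_expansion P Twa r Gs K a b \<longleftrightarrow>
     (\<forall>i\<in>{1..K}. \<forall>S\<in>sets P. S \<subseteq> cls P Gs i \<longrightarrow>
        measure P S / measure P (cls P Gs i) \<le> a \<longrightarrow>
        outP P (nbhd_set P Twa r S \<inter> cls P Gs i) / measure P (cls P Gs i)
          \<ge> min (b * (measure P S / measure P (cls P Gs i))) 1)"

definition const_expansion :: "'a measure \<Rightarrow> ('a \<Rightarrow> 'a::real_normed_vector) set \<Rightarrow> real \<Rightarrow> ('a \<Rightarrow> nat) \<Rightarrow> nat \<Rightarrow> real \<Rightarrow> real \<Rightarrow> bool" where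
  "const_expansion P Twa r Gs K c \<rho> \<longleftrightarrow>
     (\<forall>S\<in>sets P. measure P S \<ge> c \<longrightarrow>
        (\<forall>i\<in>{1..K}. measure P (S \<inter> cls P Gs i) \<le> measure P (cls P Gs i) / 2) \<longrightarrow>
        outP P (nbhd_star P Twa r Gs K S - S) \<ge> min \<rho> (measure P S))"

definition consist_loss :: "'a measure \<Rightarrow> ('a \<Rightarrow> 'a::real_normed_vector) set \<Rightarrow> real \<Rightarrow> ('a \<Rightarrow> nat) \<Rightarrow> real" where
  "consist_loss P Twa r G = outP P {x \<in> space P. \<exists>x'\<in>augset P Twa r x. G x' \<noteq> G x}"

definition min_class_mass :: "'a measure \<Rightarrow> nat \<Rightarrow> ('a \<Rightarrow> nat) \<Rightarrow> real" where
  "min_class_mass P K G = Min ((\<lambda>i. measure P {x \<in> space P. G x = i}) ` {1..K})"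

definition err_unsup :: "'a measure \<Rightarrow> ('a \<Rightarrow> nat) \<Rightarrow> nat \<Rightarrow> ('a \<Rightarrow> nat) \<Rightarrow> real" where
  "err_unsup P Gs K G = Min ((\<lambda>\<pi>. measure P {x \<in> space P. \<pi> (G x) \<noteq> Gs x}) ` {\<pi>. \<pi> permutes {1..K}})"

definition classifier :: "'a measure \<Rightarrow> nat \<Rightarrow> ('a \<Rightarrow> nat) \<Rightarrow> bool" where
  "classifier P K G \<longleftrightarrow> G \<in> measurable P (count_space UNIV) \<and> (\<forall>x\<in>space P. G x \<in> {1..K})"

end

theory Submission
  imports Defs
begin

lemma outP_ge:
  assumes "A \<subseteq> space P" "\<And>T. T \<in> sets P \<Longrightarrow> A \<subseteq> T \<Longrightarrow> x \<le> measure P T"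
  shows "x \<le> outP P A"
  unfolding outP_def
  by (rule cInf_greatest) (use assms in auto)

lemma outP_le:
  assumes "T \<in> sets P" "A \<subseteq> T"
  shows "outP P A \<le> measure P T"
  unfolding outP_def
  by (rule cInf_lower) (use assms in \<open>auto intro!: bdd_belowI[where m=0]\<close>)

lemma outP_nonneg: "A \<subseteq> space P \<Longrightarrow> 0 \<le> outP P A"
  by (rule outP_ge) auto

lemma outP_diff:
  assumes "finite_measure P" "A \<subseteq> space P" "S \<in> sets P"
  shows "outP P A \<le> outP P (A - S) + measure P S"
proof -
  have "outP P A - measure P S \<le> outP P (A - S)"
  proof (rule outP_ge)
    show "A - S \<subseteq> space P" using assms by auto
  next
    fix T assume T: "T \<in> sets P" "A - S \<subseteq> T"
    have "outP P A \<le> measure P (T \<union> S)"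
      using T assms by (intro outP_le) auto
    also have "\<dots> \<le> measure P T + measure P S"
      using T assms by (intro measure_Un_le) auto
    finally show "outP P A - measure P S \<le> measure P T" by simp
  qed
  then show ?thesis by simp
qed

lemma outP_superadd:
  assumes "finite_measure P" "finite I" "\<And>i. i \<in> I \<Longrightarrow> Q i \<in> sets P"
    "disjoint_family_on Q I" "\<And>i. i \<in> I \<Longrightarrow> A i \<subseteq> Q i"
  shows "(\<Sum>i\<in>I. outP P (A i)) \<le> outP P (\<Union>i\<in>I. A i)"
proof (rule outP_ge)
  show "(\<Union>i\<in>I. A i) \<subseteq> space P" using assms sets.sets_into_space by fastforce
next
  fix T assume T: "T \<in> sets P" "(\<Union>i\<in>I. A i) \<subseteq> T"
  have "(\<Sum>i\<in>I. outP P (A i)) \<le> (\<Sum>i\<in>I. measure P (T \<inter> Q i))"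
    using T assms by (intro sum_mono outP_le) auto
  also have "\<dots> = measure P (\<Union>i\<in>I. T \<inter> Q i)"
    using T assms
    by (intro finite_measure.finite_measure_finite_Union[symmetric])
       (auto simp: disjoint_family_on_def, blast)
  also have "\<dots> \<le> measure P T"
    using T assms by (intro finite_measure.finite_measure_mono) auto
  finally show "(\<Sum>i\<in>I. outP P (A i)) \<le> measure P T" .
qed

lemma cls_sets:
  assumes "classifier P K Gs"
  shows "cls P Gs i \<in> sets P"
proof -
  have "Gs -` {i} \<inter> space P \<in> sets P"
    using assms unfolding classifier_def by (intro measurable_sets) auto
  moreover have "cls P Gs i = Gs -` {i} \<inter> space P" unfolding cls_def by auto
  ultimately show ?thesis by simp
qed

lemma mult_to_const:
  fixes P :: "'a::real_normed_vector measure"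
  assumes PS: "prob_space P" and GS: "classifier P K Gs" and b: "b > 1"
    and ME: "mult_expansion P Twa r Gs K (1/2) b"
  shows "const_expansion P Twa r Gs K (\<rho> / (b - 1)) \<rho>"
  unfolding const_expansion_def
proof (intro ballI impI)
  have FM: "finite_measure P" using PS by (simp add: prob_space_def)
  fix S assume S: "S \<in> sets P" and Sc: "\<rho> / (b - 1) \<le> measure P S"
    and half: "\<forall>i\<in>{1..K}. measure P (S \<inter> cls P Gs i) \<le> measure P (cls P Gs i) / 2"
  define Q where "Q i = cls P Gs i" for i
  have Qs: "Q i \<in> sets P" for i unfolding Q_def using GS by (rule cls_sets)
  have Qdisj: "disjoint_family_on Q {1..K}"
    unfolding disjoint_family_on_def Q_def cls_def by auto
  have Ssp: "S \<subseteq> space P" using S sets.sets_into_space by blast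
  have Sun: "S = (\<Union>i\<in>{1..K}. S \<inter> Q i)"
    using Ssp GS unfolding classifier_def Q_def cls_def by auto
  have Ssum: "measure P S = (\<Sum>i\<in>{1..K}. measure P (S \<inter> Q i))"
    apply (subst Sun)
    apply (rule finite_measure.finite_measure_finite_Union[OF FM])
    using S Qs Qdisj by (auto simp: disjoint_family_on_def)
  define A where "A i = nbhd_set P Twa r (S \<inter> Q i) \<inter> Q i" for i
  have Asub: "A i \<subseteq> Q i" for i unfolding A_def by auto
  have Asp: "A i \<subseteq> space P" for i using Asub Qs sets.sets_into_space by blast
  have eq: "nbhd_star P Twa r Gs K S - S = (\<Union>i\<in>{1..K}. A i - (S \<inter> Q i))"
    unfolding nbhd_star_def A_def Q_def by auto
  define k where "k = min (b - 1) 1"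
  have each: "k * measure P (S \<inter> Q i) \<le> outP P (A i - (S \<inter> Q i))" if i: "i \<in> {1..K}" for i
  proof -
    define s where "s = measure P (S \<inter> Q i)"
    define q where "q = measure P (Q i)"
    have s0: "0 \<le> s" unfolding s_def by simp
    have sq: "s \<le> q / 2" unfolding s_def q_def Q_def using half i by auto
    have o3: "outP P (A i) \<le> outP P (A i - (S \<inter> Q i)) + s"
      unfolding s_def using FM Asp S Qs by (intro outP_diff) auto
    have nn: "0 \<le> outP P (A i - (S \<inter> Q i))" using Asp by (intro outP_nonneg) auto
    show ?thesis
    proof (cases "q = 0")
      case True
      then have "s = 0" using s0 sq by simp
      then show ?thesis using nn s_def by simp
    next
      case False
      then have qp: "q > 0" using sq s0 by simp
      have "outP P (A i) / q \<ge> min (b * (s / q)) 1"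
      proof -
        have SQ: "S \<inter> Q i \<in> sets P" "S \<inter> Q i \<subseteq> cls P Gs i" using S Qs unfolding Q_def by auto
        have r: "s / q \<le> 1/2" using sq qp by (simp add: field_simps)
        have "min (b * (s / q)) 1 \<le> outP P (nbhd_set P Twa r (S \<inter> Q i) \<inter> cls P Gs i) / q"
          using ME i SQ r unfolding mult_expansion_def s_def q_def Q_def by blast
        then show ?thesis unfolding A_def Q_def by simp
      qed
      then have ob: "outP P (A i) \<ge> b * s \<or> outP P (A i) \<ge> q"
        using qp by (auto simp: min_def field_simps split: if_splits)
      have k1: "k * s \<le> (b - 1) * s" "k * s \<le> s"
        unfolding k_def using s0 mult_right_mono[of "min (b - 1) 1" 1 s]
          mult_right_mono[of "min (b - 1) 1" "b - 1" s] by auto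
      show ?thesis unfolding s_def[symmetric]
        using ob o3 k1 sq s0 by (auto simp: algebra_simps)
    qed
  qed
  have "k * measure P S = (\<Sum>i\<in>{1..K}. k * measure P (S \<inter> Q i))"
    by (simp add: Ssum sum_distrib_left)
  also have "\<dots> \<le> (\<Sum>i\<in>{1..K}. outP P (A i - (S \<inter> Q i)))"
    using each by (intro sum_mono) auto
  also have "\<dots> \<le> outP P (\<Union>i\<in>{1..K}. A i - (S \<inter> Q i))"
    using FM Qs Qdisj Asub by (intro outP_superadd) auto
  finally have main: "k * measure P S \<le> outP P (nbhd_star P Twa r Gs K S - S)"
    using eq by simp
  show "min \<rho> (measure P S) \<le> outP P (nbhd_star P Twa r Gs K S - S)"
  proof (cases "b - 1 \<le> 1")
    case True
    then have "\<rho> \<le> (b - 1) * measure P S" using Sc b by (simp add: field_simps)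
    then show ?thesis using main True unfolding k_def by auto
  next
    case False
    then show ?thesis using main unfolding k_def by auto
  qed
qed

theorem lemma2:
  fixes P :: "'a::real_normed_vector measure"
    and Twa :: "('a \<Rightarrow> 'a) set" and r :: real
    and Gs G :: "'a \<Rightarrow> nat" and K :: nat and b :: real
  assumes "prob_space P"
    and "K \<ge> 1"
    and "classifier P K Gs"
    and "b > 1"
    and "mult_expansion P Twa r Gs K (1/2) b"
    and "\<forall>H c \<rho>. classifier P K H \<and> const_expansion P Twa r Gs K c \<rho>
            \<and> consist_loss P Twa r H < \<rho>
            \<and> min_class_mass P K H > 2 * max c (consist_loss P Twa r H)
          \<longrightarrow> (\<exists>\<pi>. \<pi> permutes {1..K} \<and>
                 measure P {x \<in> space P. \<pi> (H x) \<noteq> Gs x}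
                   \<le> max c (consist_loss P Twa r H) + consist_loss P Twa r H)"
    and "classifier P K G"
    and "min_class_mass P K G > max (2 / (b - 1)) 2 * consist_loss P Twa r G"
  shows "err_unsup P Gs K G \<le> max (b / (b - 1)) 2 * consist_loss P Twa r G"
proof -
  define R where "R = consist_loss P Twa r G"
  define m where "m = min_class_mass P K G"
  define e where "e = err_unsup P Gs K G"
  define M where "M = max (R / (b - 1)) R"
  have b: "b > 1" by fact
  have R0: "0 \<le> R" unfolding R_def consist_loss_def by (rule outP_nonneg) auto
  have m2: "max (2 / (b - 1)) 2 * R = 2 * M"
  proof -
    have "max (2 / (b - 1)) 2 * R = max (2 / (b - 1) * R) (2 * R)"
      using R0 by (simp add: max_mult_distrib_right)
    also have "\<dots> = 2 * M" unfolding M_def by (simp add: max_mult_distrib_left)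
    finally show ?thesis .
  qed
  have mb: "max (b / (b - 1)) 2 * R = M + R"
  proof -
    have "max (b / (b - 1)) 2 * R = max (b / (b - 1) * R) (2 * R)"
      using R0 by (simp add: max_mult_distrib_right)
    also have "b / (b - 1) * R = R / (b - 1) + R" using b by (simp add: field_simps)
    also have "max (R / (b - 1) + R) (2 * R) = M + R" unfolding M_def by (simp add: max_def)
    finally show ?thesis .
  qed
  have mM: "m > 2 * M" using assms(8) m2 unfolding m_def R_def by simp
  show ?thesis
  proof (rule ccontr)
    assume "\<not> ?thesis"
    then have eb: "e > M + R" using mb unfolding e_def R_def by simp
    define \<eta> where "\<eta> = min (e - (M + R)) (m - 2 * M) * (b - 1) / 4"
    have \<eta>0: "\<eta> > 0" unfolding \<eta>_def using eb mM b by simp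
    have \<eta>1: "\<eta> / (b - 1) \<le> (e - (M + R)) / 4" "\<eta> / (b - 1) \<le> (m - 2 * M) / 4"
    proof -
      have "\<eta> / (b - 1) = min (e - (M + R)) (m - 2 * M) / 4"
        unfolding \<eta>_def using b by (simp add: field_simps)
      then show "\<eta> / (b - 1) \<le> (e - (M + R)) / 4" "\<eta> / (b - 1) \<le> (m - 2 * M) / 4" by auto
    qed
    define \<rho> where "\<rho> = R + \<eta>"
    define c where "c = \<rho> / (b - 1)"
    have cR: "max c R \<le> M + \<eta> / (b - 1)"
    proof -
      have "c = R / (b - 1) + \<eta> / (b - 1)" unfolding c_def \<rho>_def by (simp add: add_divide_distrib)
      moreover have "\<eta> / (b - 1) \<ge> 0" using \<eta>0 b by simp
      ultimately show ?thesis unfolding M_def by linarith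
    qed
    have CE: "const_expansion P Twa r Gs K c \<rho>"
      unfolding c_def using assms(1,3,4,5) by (rule mult_to_const)
    have "\<exists>\<pi>. \<pi> permutes {1..K} \<and> measure P {x \<in> space P. \<pi> (G x) \<noteq> Gs x} \<le> max c R + R"
    proof -
      have "R < \<rho>" unfolding \<rho>_def using \<eta>0 by simp
      moreover have "m > 2 * max c R" 
      proof -
        define t where "t = \<eta> / (b - 1)"
        have "max c R \<le> M + t" "t \<le> (m - 2 * M) / 4" using cR \<eta>1(2) unfolding t_def by auto
        moreover have "4 * t \<le> m - 2 * M" using \<open>t \<le> (m - 2 * M) / 4\<close> by simp
        ultimately show ?thesis using mM by linarith
      qed
      ultimately show ?thesis
        using assms(6)[rule_format, of G c \<rho>] assms(7) CE unfolding R_def m_def by blast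
    qed
    then obtain \<pi> where \<pi>: "\<pi> permutes {1..K}" "measure P {x \<in> space P. \<pi> (G x) \<noteq> Gs x} \<le> max c R + R"
      by blast
    have "e \<le> measure P {x \<in> space P. \<pi> (G x) \<noteq> Gs x}"
      unfolding e_def err_unsup_def using \<pi>(1)
      by (intro Min_le) (auto simp: finite_permutations)
    moreover have "4 * (\<eta> / (b - 1)) \<le> e - (M + R)" using \<eta>1(1) by (simp add: mult.commute)
    ultimately show False using \<pi>(2) cR eb by linarith
  qed
qed

end
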